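(* $t(K(7,3))=\frac{4}{3}$. Moreover, if $S$ is a vertex cut of $K(7,3)$ such that $\frac{|S|}{c(K(7,3)\setminus S)} = \frac{4}{3}$, then $S$ is the complement of a maximum independent set of $K(7,3)$.
   Context: The Kneser graph $K(n,k)$ has as vertices the $k$-element subsets of $[n]=\{1,\dots,n\}$, two vertices being adjacent iff they are disjoint. A vertex cut is a set $S$ of vertices whose removal disconnects the graph; $c(G\setminus S)$ is the number of connected components after deleting $S$; the toughness is $t(G)=\min_S |S|/c(G\setminus S)$ over vertex cuts $S$. *)

theory Defs
  imports Main "HOL.Real"
begin

definition kneser_vertices :: "nat \<Rightarrow> nat \<Rightarrow> nat set set" where
  "kneser_vertices n k = {A. A \<subseteq> {1..n} \<and> card A = k}"

definition kneser_adj :: "nat set \<Rightarrow> nat set \<Rightarrow> bool" where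
  "kneser_adj A B \<longleftrightarrow> A \<inter> B = {}"

definition induced_edges :: "('a \<Rightarrow> 'a \<Rightarrow> bool) \<Rightarrow> 'a set \<Rightarrow> ('a \<times> 'a) set" where
  "induced_edges E W = {(a, b). a \<in> W \<and> b \<in> W \<and> E a b}"

definition components :: "('a \<Rightarrow> 'a \<Rightarrow> bool) \<Rightarrow> 'a set \<Rightarrow> 'a set set" where
  "components E W = (\<lambda>x. {y \<in> W. (x, y) \<in> (induced_edges E W)\<^sup>*}) ` W"

definition num_components :: "('a \<Rightarrow> 'a \<Rightarrow> bool) \<Rightarrow> 'a set \<Rightarrow> nat" where
  "num_components E W = card (components E W)"

definition vertex_cut :: "'a set \<Rightarrow> ('a \<Rightarrow> 'a \<Rightarrow> bool) \<Rightarrow> 'a set \<Rightarrow> bool" where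
  "vertex_cut V E S \<longleftrightarrow> S \<subseteq> V \<and> num_components E (V - S) \<ge> 2"

definition toughness :: "'a set \<Rightarrow> ('a \<Rightarrow> 'a \<Rightarrow> bool) \<Rightarrow> real" where
  "toughness V E = Inf {real (card S) / real (num_components E (V - S)) | S. vertex_cut V E S}"

definition independent_set :: "'a set \<Rightarrow> ('a \<Rightarrow> 'a \<Rightarrow> bool) \<Rightarrow> 'a set \<Rightarrow> bool" where
  "independent_set V E I \<longleftrightarrow> I \<subseteq> V \<and> (\<forall>a\<in>I. \<forall>b\<in>I. \<not> E a b)"

definition maximum_independent_set :: "'a set \<Rightarrow> ('a \<Rightarrow> 'a \<Rightarrow> bool) \<Rightarrow> 'a set \<Rightarrow> bool" where
  "maximum_independent_set V E I \<longleftrightarrow> independent_set V E I \<and>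
     (\<forall>J. independent_set V E J \<longrightarrow> card J \<le> card I)"

end

theory Submission
  imports Defs
begin

definition VV :: "nat set set" where "VV = kneser_vertices 7 3"

definition LL :: "nat set list" where
  "LL = [{1,2,3}, {1,2,4}, {1,2,5}, {1,2,6}, {1,2,7}, {1,3,4}, {1,3,5}, {1,3,6}, {1,3,7}, {1,4,5}, {1,4,6}, {1,4,7}, {1,5,6}, {1,5,7}, {1,6,7}, {2,3,4}, {2,3,5}, {2,3,6}, {2,3,7}, {2,4,5}, {2,4,6}, {2,4,7}, {2,5,6}, {2,5,7}, {2,6,7}, {3,4,5}, {3,4,6}, {3,4,7}, {3,5,6}, {3,5,7}, {3,6,7}, {4,5,6}, {4,5,7}, {4,6,7}, {5,6,7}]"

lemma distinct_LL: "distinct LL"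
proof -
  have "distinct (map (\<lambda>A. \<Sum>x\<in>A. (2::nat)^x) LL)" by (simp add: LL_def)
  thus ?thesis by (simp add: distinct_map)
qed

lemma card_VV: "card VV = 35"
proof -
  have "card VV = card {1..(7::nat)} choose 3"
    unfolding VV_def kneser_vertices_def by (rule n_subsets) simp
  thus ?thesis by (simp add: numeral_eq_Suc)
qed

lemma VV_eq: "VV = set LL"
proof -
  have sub: "set LL \<subseteq> VV" by (simp add: LL_def VV_def kneser_vertices_def)
  have "card (set LL) = 35" using distinct_card[OF distinct_LL] by (simp add: LL_def)
  thus ?thesis using card_subset_eq[OF _ sub] card_VV
    by (metis card.infinite zero_neq_numeral)
qed

lemma sumVV: "(\<Sum>u\<in>VV. g u) = sum_list (map g LL)"
  by (simp add: VV_eq sum.distinct_set_conv_list[OF distinct_LL])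

lemma sos1_id:
  fixes f :: "nat set \<Rightarrow> real"
  shows "70 * ((\<Sum>u\<in>VV. \<Sum>v\<in>VV. if u \<inter> v = {} then f u * f v else 0) + 3 * (\<Sum>u\<in>VV. f u * f u))
    = 10 * (\<Sum>w\<in>VV. (3 * f w + (\<Sum>v\<in>VV. if v \<inter> w = {} then f v else 0))\<^sup>2)
      + (\<Sum>w\<in>VV. (8 * f w + (\<Sum>v\<in>VV. if v \<inter> w = {} then f v else 0)
            - (\<Sum>v\<in>VV. if card (v \<inter> w) = 2 then f v else 0))\<^sup>2)"
  unfolding sumVV by (simp add: LL_def) algebra

lemma sos1:
  fixes f :: "nat set \<Rightarrow> real"
  shows "0 \<le> (\<Sum>u\<in>VV. \<Sum>v\<in>VV. if u \<inter> v = {} then f u * f v else 0) + 3 * (\<Sum>u\<in>VV. f u * f u)"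
proof -
  have "0 \<le> 70 * ((\<Sum>u\<in>VV. \<Sum>v\<in>VV. if u \<inter> v = {} then f u * f v else 0) + 3 * (\<Sum>u\<in>VV. f u * f u))"
    unfolding sos1_id
    by (intro add_nonneg_nonneg mult_nonneg_nonneg sum_nonneg zero_le_power2) auto
  thus ?thesis by simp
qed

lemma sos2:
  fixes f :: "nat set \<Rightarrow> real"
  shows "980 * (\<Sum>u\<in>VV. \<Sum>v\<in>VV. if u \<inter> v = {} then f u * f v else 0)
     \<le> 1960 * (\<Sum>u\<in>VV. f u * f u) + 56 * (\<Sum>u\<in>VV. f u)\<^sup>2"
proof -
  have eq: "1960 * (\<Sum>u\<in>VV. f u * f u) + 56 * (\<Sum>u\<in>VV. f u)\<^sup>2
      - 980 * (\<Sum>u\<in>VV. \<Sum>v\<in>VV. if u \<inter> v = {} then f u * f v else 0)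
    = 10 * (\<Sum>z\<leftarrow>[1,2,3,4,5,6,7]. (7 * (\<Sum>u\<in>VV. if (z::nat) \<in> u then f u else 0) - 3 * (\<Sum>u\<in>VV. f u))\<^sup>2)
      + 49 * ((f {2,4,6} - f {2,4,7} - f {2,5,6} + f {2,5,7} - f {3,4,6} + f {3,4,7} + f {3,5,6} - f {3,5,7})\<^sup>2 + (f {2,4,5} - f {2,4,7} - f {2,5,6} + f {2,6,7} - f {3,4,5} + f {3,4,7} + f {3,5,6} - f {3,6,7})\<^sup>2 + (f {2,4,5} - f {2,4,6} - f {2,5,7} + f {2,6,7} - f {3,4,5} + f {3,4,6} + f {3,5,7} - f {3,6,7})\<^sup>2 + (f {2,3,6} - f {2,3,7} - f {2,5,6} + f {2,5,7} - f {3,4,6} + f {3,4,7} + f {4,5,6} - f {4,5,7})\<^sup>2 + (f {2,3,5} - f {2,3,7} - f {2,5,6} + f {2,6,7} - f {3,4,5} + f {3,4,7} + f {4,5,6} - f {4,6,7})\<^sup>2 + (f {2,3,5} - f {2,3,6} - f {2,5,7} + f {2,6,7} - f {3,4,5} + f {3,4,6} + f {4,5,7} - f {4,6,7})\<^sup>2 + (f {2,3,6} - f {2,3,7} - f {2,4,6} + f {2,4,7} - f {3,5,6} + f {3,5,7} + f {4,5,6} - f {4,5,7})\<^sup>2 + (f {2,3,4} - f {2,3,7} - f {2,4,6} + f {2,6,7} - f {3,4,5} + f {3,5,7} + f {4,5,6} - f {5,6,7})\<^sup>2 + (f {2,3,4} - f {2,3,6} - f {2,4,7} + f {2,6,7}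 - f {3,4,5} + f {3,5,6} + f {4,5,7} - f {5,6,7})\<^sup>2 + (f {2,3,5} - f {2,3,7} - f {2,4,5} + f {2,4,7} - f {3,5,6} + f {3,6,7} + f {4,5,6} - f {4,6,7})\<^sup>2 + (f {2,3,4} - f {2,3,7} - f {2,4,5} + f {2,5,7} - f {3,4,6} + f {3,6,7} + f {4,5,6} - f {5,6,7})\<^sup>2 + (f {2,3,4} - f {2,3,5} - f {2,4,7} + f {2,5,7} - f {3,4,6} + f {3,5,6} + f {4,6,7} - f {5,6,7})\<^sup>2 + (f {2,3,5} - f {2,3,6} - f {2,4,5} + f {2,4,6} - f {3,5,7} + f {3,6,7} + f {4,5,7} - f {4,6,7})\<^sup>2 + (f {2,3,4} - f {2,3,6} - f {2,4,5} + f {2,5,6} - f {3,4,7} + f {3,6,7} + f {4,5,7} - f {5,6,7})\<^sup>2 + (f {2,3,4} - f {2,3,5} - f {2,4,6} + f {2,5,6} - f {3,4,7} + f {3,5,7} + f {4,6,7} - f {5,6,7})\<^sup>2 + (f {1,4,6} - f {1,4,7} - f {1,5,6} + f {1,5,7} - f {3,4,6} + f {3,4,7} + f {3,5,6} - f {3,5,7})\<^sup>2 + (f {1,4,5} - f {1,4,7} - f {1,5,6} + f {1,6,7} - f {3,4,5} + f {3,4,7} + f {3,5,6} - f {3,6,7})\<^sup>2 + (f {1,4,5} - f {1,4,6} - f {1,5,7} + f {1,6,7} - f {3,4,5} + f {3,4,6} + f {3,5,7} - f {3,6,7})\<^sup>2 + (f {1,3,6} - f {1,3,7} - f {1,5,6}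 + f {1,5,7} - f {3,4,6} + f {3,4,7} + f {4,5,6} - f {4,5,7})\<^sup>2 + (f {1,3,5} - f {1,3,7} - f {1,5,6} + f {1,6,7} - f {3,4,5} + f {3,4,7} + f {4,5,6} - f {4,6,7})\<^sup>2 + (f {1,3,5} - f {1,3,6} - f {1,5,7} + f {1,6,7} - f {3,4,5} + f {3,4,6} + f {4,5,7} - f {4,6,7})\<^sup>2 + (f {1,3,6} - f {1,3,7} - f {1,4,6} + f {1,4,7} - f {3,5,6} + f {3,5,7} + f {4,5,6} - f {4,5,7})\<^sup>2 + (f {1,3,4} - f {1,3,7} - f {1,4,6} + f {1,6,7} - f {3,4,5} + f {3,5,7} + f {4,5,6} - f {5,6,7})\<^sup>2 + (f {1,3,4} - f {1,3,6} - f {1,4,7} + f {1,6,7} - f {3,4,5} + f {3,5,6} + f {4,5,7} - f {5,6,7})\<^sup>2 + (f {1,3,5} - f {1,3,7} - f {1,4,5} + f {1,4,7} - f {3,5,6} + f {3,6,7} + f {4,5,6} - f {4,6,7})\<^sup>2 + (f {1,3,4} - f {1,3,7} - f {1,4,5} + f {1,5,7} - f {3,4,6} + f {3,6,7} + f {4,5,6} - f {5,6,7})\<^sup>2 + (f {1,3,4} - f {1,3,5} - f {1,4,7} + f {1,5,7} - f {3,4,6} + f {3,5,6} + f {4,6,7} - f {5,6,7})\<^sup>2 + (f {1,3,5} - f {1,3,6} - f {1,4,5} + f {1,4,6} - f {3,5,7} + f {3,6,7} + f {4,5,7} - f {4,6,7})\<^sup>2 + (f {1,3,4} - f {1,3,6}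 - f {1,4,5} + f {1,5,6} - f {3,4,7} + f {3,6,7} + f {4,5,7} - f {5,6,7})\<^sup>2 + (f {1,3,4} - f {1,3,5} - f {1,4,6} + f {1,5,6} - f {3,4,7} + f {3,5,7} + f {4,6,7} - f {5,6,7})\<^sup>2 + (f {1,4,6} - f {1,4,7} - f {1,5,6} + f {1,5,7} - f {2,4,6} + f {2,4,7} + f {2,5,6} - f {2,5,7})\<^sup>2 + (f {1,4,5} - f {1,4,7} - f {1,5,6} + f {1,6,7} - f {2,4,5} + f {2,4,7} + f {2,5,6} - f {2,6,7})\<^sup>2 + (f {1,4,5} - f {1,4,6} - f {1,5,7} + f {1,6,7} - f {2,4,5} + f {2,4,6} + f {2,5,7} - f {2,6,7})\<^sup>2 + (f {1,2,6} - f {1,2,7} - f {1,5,6} + f {1,5,7} - f {2,4,6} + f {2,4,7} + f {4,5,6} - f {4,5,7})\<^sup>2 + (f {1,2,5} - f {1,2,7} - f {1,5,6} + f {1,6,7} - f {2,4,5} + f {2,4,7} + f {4,5,6} - f {4,6,7})\<^sup>2 + (f {1,2,5} - f {1,2,6} - f {1,5,7} + f {1,6,7} - f {2,4,5} + f {2,4,6} + f {4,5,7} - f {4,6,7})\<^sup>2 + (f {1,2,6} - f {1,2,7} - f {1,4,6} + f {1,4,7} - f {2,5,6} + f {2,5,7} + f {4,5,6} - f {4,5,7})\<^sup>2 + (f {1,2,4} - f {1,2,7} - f {1,4,6} + f {1,6,7} - f {2,4,5} + f {2,5,7} + f {4,5,6} - f {5,6,7})\<^sup>2 + (f {1,2,4}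 - f {1,2,6} - f {1,4,7} + f {1,6,7} - f {2,4,5} + f {2,5,6} + f {4,5,7} - f {5,6,7})\<^sup>2 + (f {1,2,5} - f {1,2,7} - f {1,4,5} + f {1,4,7} - f {2,5,6} + f {2,6,7} + f {4,5,6} - f {4,6,7})\<^sup>2 + (f {1,2,4} - f {1,2,7} - f {1,4,5} + f {1,5,7} - f {2,4,6} + f {2,6,7} + f {4,5,6} - f {5,6,7})\<^sup>2 + (f {1,2,4} - f {1,2,5} - f {1,4,7} + f {1,5,7} - f {2,4,6} + f {2,5,6} + f {4,6,7} - f {5,6,7})\<^sup>2 + (f {1,2,5} - f {1,2,6} - f {1,4,5} + f {1,4,6} - f {2,5,7} + f {2,6,7} + f {4,5,7} - f {4,6,7})\<^sup>2 + (f {1,2,4} - f {1,2,6} - f {1,4,5} + f {1,5,6} - f {2,4,7} + f {2,6,7} + f {4,5,7} - f {5,6,7})\<^sup>2 + (f {1,2,4} - f {1,2,5} - f {1,4,6} + f {1,5,6} - f {2,4,7} + f {2,5,7} + f {4,6,7} - f {5,6,7})\<^sup>2 + (f {1,3,6} - f {1,3,7} - f {1,5,6} + f {1,5,7} - f {2,3,6} + f {2,3,7} + f {2,5,6} - f {2,5,7})\<^sup>2 + (f {1,3,5} - f {1,3,7} - f {1,5,6} + f {1,6,7} - f {2,3,5} + f {2,3,7} + f {2,5,6} - f {2,6,7})\<^sup>2 + (f {1,3,5} - f {1,3,6} - f {1,5,7} + f {1,6,7} - f {2,3,5} + f {2,3,6} + f {2,5,7} - f {2,6,7})\<^sup>2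 + (f {1,2,6} - f {1,2,7} - f {1,5,6} + f {1,5,7} - f {2,3,6} + f {2,3,7} + f {3,5,6} - f {3,5,7})\<^sup>2 + (f {1,2,5} - f {1,2,7} - f {1,5,6} + f {1,6,7} - f {2,3,5} + f {2,3,7} + f {3,5,6} - f {3,6,7})\<^sup>2 + (f {1,2,5} - f {1,2,6} - f {1,5,7} + f {1,6,7} - f {2,3,5} + f {2,3,6} + f {3,5,7} - f {3,6,7})\<^sup>2 + (f {1,2,6} - f {1,2,7} - f {1,3,6} + f {1,3,7} - f {2,5,6} + f {2,5,7} + f {3,5,6} - f {3,5,7})\<^sup>2 + (f {1,2,3} - f {1,2,7} - f {1,3,6} + f {1,6,7} - f {2,3,5} + f {2,5,7} + f {3,5,6} - f {5,6,7})\<^sup>2 + (f {1,2,3} - f {1,2,6} - f {1,3,7} + f {1,6,7} - f {2,3,5} + f {2,5,6} + f {3,5,7} - f {5,6,7})\<^sup>2 + (f {1,2,5} - f {1,2,7} - f {1,3,5} + f {1,3,7} - f {2,5,6} + f {2,6,7} + f {3,5,6} - f {3,6,7})\<^sup>2 + (f {1,2,3} - f {1,2,7} - f {1,3,5} + f {1,5,7} - f {2,3,6} + f {2,6,7} + f {3,5,6} - f {5,6,7})\<^sup>2 + (f {1,2,3} - f {1,2,5} - f {1,3,7} + f {1,5,7} - f {2,3,6} + f {2,5,6} + f {3,6,7} - f {5,6,7})\<^sup>2 + (f {1,2,5} - f {1,2,6} - f {1,3,5} + f {1,3,6} - f {2,5,7} + f {2,6,7} + f {3,5,7} - f {3,6,7})\<^sup>2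 + (f {1,2,3} - f {1,2,6} - f {1,3,5} + f {1,5,6} - f {2,3,7} + f {2,6,7} + f {3,5,7} - f {5,6,7})\<^sup>2 + (f {1,2,3} - f {1,2,5} - f {1,3,6} + f {1,5,6} - f {2,3,7} + f {2,5,7} + f {3,6,7} - f {5,6,7})\<^sup>2 + (f {1,3,6} - f {1,3,7} - f {1,4,6} + f {1,4,7} - f {2,3,6} + f {2,3,7} + f {2,4,6} - f {2,4,7})\<^sup>2 + (f {1,3,4} - f {1,3,7} - f {1,4,6} + f {1,6,7} - f {2,3,4} + f {2,3,7} + f {2,4,6} - f {2,6,7})\<^sup>2 + (f {1,3,4} - f {1,3,6} - f {1,4,7} + f {1,6,7} - f {2,3,4} + f {2,3,6} + f {2,4,7} - f {2,6,7})\<^sup>2 + (f {1,2,6} - f {1,2,7} - f {1,4,6} + f {1,4,7} - f {2,3,6} + f {2,3,7} + f {3,4,6} - f {3,4,7})\<^sup>2 + (f {1,2,4} - f {1,2,7} - f {1,4,6} + f {1,6,7} - f {2,3,4} + f {2,3,7} + f {3,4,6} - f {3,6,7})\<^sup>2 + (f {1,2,4} - f {1,2,6} - f {1,4,7} + f {1,6,7} - f {2,3,4} + f {2,3,6} + f {3,4,7} - f {3,6,7})\<^sup>2 + (f {1,2,6} - f {1,2,7} - f {1,3,6} + f {1,3,7} - f {2,4,6} + f {2,4,7} + f {3,4,6} - f {3,4,7})\<^sup>2 + (f {1,2,3} - f {1,2,7} - f {1,3,6} + f {1,6,7} - f {2,3,4} + f {2,4,7} + f {3,4,6} - f {4,6,7})\<^sup>2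 + (f {1,2,3} - f {1,2,6} - f {1,3,7} + f {1,6,7} - f {2,3,4} + f {2,4,6} + f {3,4,7} - f {4,6,7})\<^sup>2 + (f {1,2,4} - f {1,2,7} - f {1,3,4} + f {1,3,7} - f {2,4,6} + f {2,6,7} + f {3,4,6} - f {3,6,7})\<^sup>2 + (f {1,2,3} - f {1,2,7} - f {1,3,4} + f {1,4,7} - f {2,3,6} + f {2,6,7} + f {3,4,6} - f {4,6,7})\<^sup>2 + (f {1,2,3} - f {1,2,4} - f {1,3,7} + f {1,4,7} - f {2,3,6} + f {2,4,6} + f {3,6,7} - f {4,6,7})\<^sup>2 + (f {1,2,4} - f {1,2,6} - f {1,3,4} + f {1,3,6} - f {2,4,7} + f {2,6,7} + f {3,4,7} - f {3,6,7})\<^sup>2 + (f {1,2,3} - f {1,2,6} - f {1,3,4} + f {1,4,6} - f {2,3,7} + f {2,6,7} + f {3,4,7} - f {4,6,7})\<^sup>2 + (f {1,2,3} - f {1,2,4} - f {1,3,6} + f {1,4,6} - f {2,3,7} + f {2,4,7} + f {3,6,7} - f {4,6,7})\<^sup>2 + (f {1,3,5} - f {1,3,7} - f {1,4,5} + f {1,4,7} - f {2,3,5} + f {2,3,7} + f {2,4,5} - f {2,4,7})\<^sup>2 + (f {1,3,4} - f {1,3,7} - f {1,4,5} + f {1,5,7} - f {2,3,4} + f {2,3,7} + f {2,4,5} - f {2,5,7})\<^sup>2 + (f {1,3,4} - f {1,3,5} - f {1,4,7} + f {1,5,7} - f {2,3,4} + f {2,3,5} + f {2,4,7} - f {2,5,7})\<^sup>2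 + (f {1,2,5} - f {1,2,7} - f {1,4,5} + f {1,4,7} - f {2,3,5} + f {2,3,7} + f {3,4,5} - f {3,4,7})\<^sup>2 + (f {1,2,4} - f {1,2,7} - f {1,4,5} + f {1,5,7} - f {2,3,4} + f {2,3,7} + f {3,4,5} - f {3,5,7})\<^sup>2 + (f {1,2,4} - f {1,2,5} - f {1,4,7} + f {1,5,7} - f {2,3,4} + f {2,3,5} + f {3,4,7} - f {3,5,7})\<^sup>2 + (f {1,2,5} - f {1,2,7} - f {1,3,5} + f {1,3,7} - f {2,4,5} + f {2,4,7} + f {3,4,5} - f {3,4,7})\<^sup>2 + (f {1,2,3} - f {1,2,7} - f {1,3,5} + f {1,5,7} - f {2,3,4} + f {2,4,7} + f {3,4,5} - f {4,5,7})\<^sup>2 + (f {1,2,3} - f {1,2,5} - f {1,3,7} + f {1,5,7} - f {2,3,4} + f {2,4,5} + f {3,4,7} - f {4,5,7})\<^sup>2 + (f {1,2,4} - f {1,2,7} - f {1,3,4} + f {1,3,7} - f {2,4,5} + f {2,5,7} + f {3,4,5} - f {3,5,7})\<^sup>2 + (f {1,2,3} - f {1,2,7} - f {1,3,4} + f {1,4,7} - f {2,3,5} + f {2,5,7} + f {3,4,5} - f {4,5,7})\<^sup>2 + (f {1,2,3} - f {1,2,4} - f {1,3,7} + f {1,4,7} - f {2,3,5} + f {2,4,5} + f {3,5,7} - f {4,5,7})\<^sup>2 + (f {1,2,4} - f {1,2,5} - f {1,3,4} + f {1,3,5} - f {2,4,7} + f {2,5,7} + f {3,4,7} - f {3,5,7})\<^sup>2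 + (f {1,2,3} - f {1,2,5} - f {1,3,4} + f {1,4,5} - f {2,3,7} + f {2,5,7} + f {3,4,7} - f {4,5,7})\<^sup>2 + (f {1,2,3} - f {1,2,4} - f {1,3,5} + f {1,4,5} - f {2,3,7} + f {2,4,7} + f {3,5,7} - f {4,5,7})\<^sup>2 + (f {1,3,5} - f {1,3,6} - f {1,4,5} + f {1,4,6} - f {2,3,5} + f {2,3,6} + f {2,4,5} - f {2,4,6})\<^sup>2 + (f {1,3,4} - f {1,3,6} - f {1,4,5} + f {1,5,6} - f {2,3,4} + f {2,3,6} + f {2,4,5} - f {2,5,6})\<^sup>2 + (f {1,3,4} - f {1,3,5} - f {1,4,6} + f {1,5,6} - f {2,3,4} + f {2,3,5} + f {2,4,6} - f {2,5,6})\<^sup>2 + (f {1,2,5} - f {1,2,6} - f {1,4,5} + f {1,4,6} - f {2,3,5} + f {2,3,6} + f {3,4,5} - f {3,4,6})\<^sup>2 + (f {1,2,4} - f {1,2,6} - f {1,4,5} + f {1,5,6} - f {2,3,4} + f {2,3,6} + f {3,4,5} - f {3,5,6})\<^sup>2 + (f {1,2,4} - f {1,2,5} - f {1,4,6} + f {1,5,6} - f {2,3,4} + f {2,3,5} + f {3,4,6} - f {3,5,6})\<^sup>2 + (f {1,2,5} - f {1,2,6} - f {1,3,5} + f {1,3,6} - f {2,4,5} + f {2,4,6} + f {3,4,5} - f {3,4,6})\<^sup>2 + (f {1,2,3} - f {1,2,6} - f {1,3,5} + f {1,5,6} - f {2,3,4} + f {2,4,6} + f {3,4,5} - f {4,5,6})\<^sup>2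 + (f {1,2,3} - f {1,2,5} - f {1,3,6} + f {1,5,6} - f {2,3,4} + f {2,4,5} + f {3,4,6} - f {4,5,6})\<^sup>2 + (f {1,2,4} - f {1,2,6} - f {1,3,4} + f {1,3,6} - f {2,4,5} + f {2,5,6} + f {3,4,5} - f {3,5,6})\<^sup>2 + (f {1,2,3} - f {1,2,6} - f {1,3,4} + f {1,4,6} - f {2,3,5} + f {2,5,6} + f {3,4,5} - f {4,5,6})\<^sup>2 + (f {1,2,3} - f {1,2,4} - f {1,3,6} + f {1,4,6} - f {2,3,5} + f {2,4,5} + f {3,5,6} - f {4,5,6})\<^sup>2 + (f {1,2,4} - f {1,2,5} - f {1,3,4} + f {1,3,5} - f {2,4,6} + f {2,5,6} + f {3,4,6} - f {3,5,6})\<^sup>2 + (f {1,2,3} - f {1,2,5} - f {1,3,4} + f {1,4,5} - f {2,3,6} + f {2,5,6} + f {3,4,6} - f {4,5,6})\<^sup>2 + (f {1,2,3} - f {1,2,4} - f {1,3,5} + f {1,4,5} - f {2,3,6} + f {2,4,6} + f {3,5,6} - f {4,5,6})\<^sup>2)"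
    unfolding sumVV by (simp add: LL_def) algebra
  have "0 \<le> 10 * (\<Sum>z\<leftarrow>[1,2,3,4,5,6,7]. (7 * (\<Sum>u\<in>VV. if (z::nat) \<in> u then f u else 0) - 3 * (\<Sum>u\<in>VV. f u))\<^sup>2)
      + 49 * ((f {2,4,6} - f {2,4,7} - f {2,5,6} + f {2,5,7} - f {3,4,6} + f {3,4,7} + f {3,5,6} - f {3,5,7})\<^sup>2 + (f {2,4,5} - f {2,4,7} - f {2,5,6} + f {2,6,7} - f {3,4,5} + f {3,4,7} + f {3,5,6} - f {3,6,7})\<^sup>2 + (f {2,4,5} - f {2,4,6} - f {2,5,7} + f {2,6,7} - f {3,4,5} + f {3,4,6} + f {3,5,7} - f {3,6,7})\<^sup>2 + (f {2,3,6} - f {2,3,7} - f {2,5,6} + f {2,5,7} - f {3,4,6} + f {3,4,7} + f {4,5,6} - f {4,5,7})\<^sup>2 + (f {2,3,5} - f {2,3,7} - f {2,5,6} + f {2,6,7} - f {3,4,5} + f {3,4,7} + f {4,5,6} - f {4,6,7})\<^sup>2 + (f {2,3,5} - f {2,3,6} - f {2,5,7} + f {2,6,7} - f {3,4,5} + f {3,4,6} + f {4,5,7} - f {4,6,7})\<^sup>2 + (f {2,3,6} - f {2,3,7} - f {2,4,6} + f {2,4,7} - f {3,5,6} + f {3,5,7} + f {4,5,6} - f {4,5,7})\<^sup>2 + (f {2,3,4} - f {2,3,7} - f {2,4,6} + f {2,6,7} - f {3,4,5} + f {3,5,7} + f {4,5,6} - f {5,6,7})\<^sup>2 + (f {2,3,4}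 - f {2,3,6} - f {2,4,7} + f {2,6,7} - f {3,4,5} + f {3,5,6} + f {4,5,7} - f {5,6,7})\<^sup>2 + (f {2,3,5} - f {2,3,7} - f {2,4,5} + f {2,4,7} - f {3,5,6} + f {3,6,7} + f {4,5,6} - f {4,6,7})\<^sup>2 + (f {2,3,4} - f {2,3,7} - f {2,4,5} + f {2,5,7} - f {3,4,6} + f {3,6,7} + f {4,5,6} - f {5,6,7})\<^sup>2 + (f {2,3,4} - f {2,3,5} - f {2,4,7} + f {2,5,7} - f {3,4,6} + f {3,5,6} + f {4,6,7} - f {5,6,7})\<^sup>2 + (f {2,3,5} - f {2,3,6} - f {2,4,5} + f {2,4,6} - f {3,5,7} + f {3,6,7} + f {4,5,7} - f {4,6,7})\<^sup>2 + (f {2,3,4} - f {2,3,6} - f {2,4,5} + f {2,5,6} - f {3,4,7} + f {3,6,7} + f {4,5,7} - f {5,6,7})\<^sup>2 + (f {2,3,4} - f {2,3,5} - f {2,4,6} + f {2,5,6} - f {3,4,7} + f {3,5,7} + f {4,6,7} - f {5,6,7})\<^sup>2 + (f {1,4,6} - f {1,4,7} - f {1,5,6} + f {1,5,7} - f {3,4,6} + f {3,4,7} + f {3,5,6} - f {3,5,7})\<^sup>2 + (f {1,4,5} - f {1,4,7} - f {1,5,6} + f {1,6,7} - f {3,4,5} + f {3,4,7} + f {3,5,6} - f {3,6,7})\<^sup>2 + (f {1,4,5} - f {1,4,6} - f {1,5,7} + f {1,6,7} - f {3,4,5} + f {3,4,6} + f {3,5,7} - f {3,6,7})\<^sup>2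 + (f {1,3,6} - f {1,3,7} - f {1,5,6} + f {1,5,7} - f {3,4,6} + f {3,4,7} + f {4,5,6} - f {4,5,7})\<^sup>2 + (f {1,3,5} - f {1,3,7} - f {1,5,6} + f {1,6,7} - f {3,4,5} + f {3,4,7} + f {4,5,6} - f {4,6,7})\<^sup>2 + (f {1,3,5} - f {1,3,6} - f {1,5,7} + f {1,6,7} - f {3,4,5} + f {3,4,6} + f {4,5,7} - f {4,6,7})\<^sup>2 + (f {1,3,6} - f {1,3,7} - f {1,4,6} + f {1,4,7} - f {3,5,6} + f {3,5,7} + f {4,5,6} - f {4,5,7})\<^sup>2 + (f {1,3,4} - f {1,3,7} - f {1,4,6} + f {1,6,7} - f {3,4,5} + f {3,5,7} + f {4,5,6} - f {5,6,7})\<^sup>2 + (f {1,3,4} - f {1,3,6} - f {1,4,7} + f {1,6,7} - f {3,4,5} + f {3,5,6} + f {4,5,7} - f {5,6,7})\<^sup>2 + (f {1,3,5} - f {1,3,7} - f {1,4,5} + f {1,4,7} - f {3,5,6} + f {3,6,7} + f {4,5,6} - f {4,6,7})\<^sup>2 + (f {1,3,4} - f {1,3,7} - f {1,4,5} + f {1,5,7} - f {3,4,6} + f {3,6,7} + f {4,5,6} - f {5,6,7})\<^sup>2 + (f {1,3,4} - f {1,3,5} - f {1,4,7} + f {1,5,7} - f {3,4,6} + f {3,5,6} + f {4,6,7} - f {5,6,7})\<^sup>2 + (f {1,3,5} - f {1,3,6} - f {1,4,5} + f {1,4,6} - f {3,5,7} + f {3,6,7} + f {4,5,7} - f {4,6,7})\<^sup>2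 + (f {1,3,4} - f {1,3,6} - f {1,4,5} + f {1,5,6} - f {3,4,7} + f {3,6,7} + f {4,5,7} - f {5,6,7})\<^sup>2 + (f {1,3,4} - f {1,3,5} - f {1,4,6} + f {1,5,6} - f {3,4,7} + f {3,5,7} + f {4,6,7} - f {5,6,7})\<^sup>2 + (f {1,4,6} - f {1,4,7} - f {1,5,6} + f {1,5,7} - f {2,4,6} + f {2,4,7} + f {2,5,6} - f {2,5,7})\<^sup>2 + (f {1,4,5} - f {1,4,7} - f {1,5,6} + f {1,6,7} - f {2,4,5} + f {2,4,7} + f {2,5,6} - f {2,6,7})\<^sup>2 + (f {1,4,5} - f {1,4,6} - f {1,5,7} + f {1,6,7} - f {2,4,5} + f {2,4,6} + f {2,5,7} - f {2,6,7})\<^sup>2 + (f {1,2,6} - f {1,2,7} - f {1,5,6} + f {1,5,7} - f {2,4,6} + f {2,4,7} + f {4,5,6} - f {4,5,7})\<^sup>2 + (f {1,2,5} - f {1,2,7} - f {1,5,6} + f {1,6,7} - f {2,4,5} + f {2,4,7} + f {4,5,6} - f {4,6,7})\<^sup>2 + (f {1,2,5} - f {1,2,6} - f {1,5,7} + f {1,6,7} - f {2,4,5} + f {2,4,6} + f {4,5,7} - f {4,6,7})\<^sup>2 + (f {1,2,6} - f {1,2,7} - f {1,4,6} + f {1,4,7} - f {2,5,6} + f {2,5,7} + f {4,5,6} - f {4,5,7})\<^sup>2 + (f {1,2,4} - f {1,2,7} - f {1,4,6} + f {1,6,7} - f {2,4,5} + f {2,5,7} + f {4,5,6} - f {5,6,7})\<^sup>2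 + (f {1,2,4} - f {1,2,6} - f {1,4,7} + f {1,6,7} - f {2,4,5} + f {2,5,6} + f {4,5,7} - f {5,6,7})\<^sup>2 + (f {1,2,5} - f {1,2,7} - f {1,4,5} + f {1,4,7} - f {2,5,6} + f {2,6,7} + f {4,5,6} - f {4,6,7})\<^sup>2 + (f {1,2,4} - f {1,2,7} - f {1,4,5} + f {1,5,7} - f {2,4,6} + f {2,6,7} + f {4,5,6} - f {5,6,7})\<^sup>2 + (f {1,2,4} - f {1,2,5} - f {1,4,7} + f {1,5,7} - f {2,4,6} + f {2,5,6} + f {4,6,7} - f {5,6,7})\<^sup>2 + (f {1,2,5} - f {1,2,6} - f {1,4,5} + f {1,4,6} - f {2,5,7} + f {2,6,7} + f {4,5,7} - f {4,6,7})\<^sup>2 + (f {1,2,4} - f {1,2,6} - f {1,4,5} + f {1,5,6} - f {2,4,7} + f {2,6,7} + f {4,5,7} - f {5,6,7})\<^sup>2 + (f {1,2,4} - f {1,2,5} - f {1,4,6} + f {1,5,6} - f {2,4,7} + f {2,5,7} + f {4,6,7} - f {5,6,7})\<^sup>2 + (f {1,3,6} - f {1,3,7} - f {1,5,6} + f {1,5,7} - f {2,3,6} + f {2,3,7} + f {2,5,6} - f {2,5,7})\<^sup>2 + (f {1,3,5} - f {1,3,7} - f {1,5,6} + f {1,6,7} - f {2,3,5} + f {2,3,7} + f {2,5,6} - f {2,6,7})\<^sup>2 + (f {1,3,5} - f {1,3,6} - f {1,5,7} + f {1,6,7} - f {2,3,5} + f {2,3,6} + f {2,5,7} - f {2,6,7})\<^sup>2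 + (f {1,2,6} - f {1,2,7} - f {1,5,6} + f {1,5,7} - f {2,3,6} + f {2,3,7} + f {3,5,6} - f {3,5,7})\<^sup>2 + (f {1,2,5} - f {1,2,7} - f {1,5,6} + f {1,6,7} - f {2,3,5} + f {2,3,7} + f {3,5,6} - f {3,6,7})\<^sup>2 + (f {1,2,5} - f {1,2,6} - f {1,5,7} + f {1,6,7} - f {2,3,5} + f {2,3,6} + f {3,5,7} - f {3,6,7})\<^sup>2 + (f {1,2,6} - f {1,2,7} - f {1,3,6} + f {1,3,7} - f {2,5,6} + f {2,5,7} + f {3,5,6} - f {3,5,7})\<^sup>2 + (f {1,2,3} - f {1,2,7} - f {1,3,6} + f {1,6,7} - f {2,3,5} + f {2,5,7} + f {3,5,6} - f {5,6,7})\<^sup>2 + (f {1,2,3} - f {1,2,6} - f {1,3,7} + f {1,6,7} - f {2,3,5} + f {2,5,6} + f {3,5,7} - f {5,6,7})\<^sup>2 + (f {1,2,5} - f {1,2,7} - f {1,3,5} + f {1,3,7} - f {2,5,6} + f {2,6,7} + f {3,5,6} - f {3,6,7})\<^sup>2 + (f {1,2,3} - f {1,2,7} - f {1,3,5} + f {1,5,7} - f {2,3,6} + f {2,6,7} + f {3,5,6} - f {5,6,7})\<^sup>2 + (f {1,2,3} - f {1,2,5} - f {1,3,7} + f {1,5,7} - f {2,3,6} + f {2,5,6} + f {3,6,7} - f {5,6,7})\<^sup>2 + (f {1,2,5} - f {1,2,6} - f {1,3,5} + f {1,3,6} - f {2,5,7} + f {2,6,7} + f {3,5,7} - f {3,6,7})\<^sup>2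 + (f {1,2,3} - f {1,2,6} - f {1,3,5} + f {1,5,6} - f {2,3,7} + f {2,6,7} + f {3,5,7} - f {5,6,7})\<^sup>2 + (f {1,2,3} - f {1,2,5} - f {1,3,6} + f {1,5,6} - f {2,3,7} + f {2,5,7} + f {3,6,7} - f {5,6,7})\<^sup>2 + (f {1,3,6} - f {1,3,7} - f {1,4,6} + f {1,4,7} - f {2,3,6} + f {2,3,7} + f {2,4,6} - f {2,4,7})\<^sup>2 + (f {1,3,4} - f {1,3,7} - f {1,4,6} + f {1,6,7} - f {2,3,4} + f {2,3,7} + f {2,4,6} - f {2,6,7})\<^sup>2 + (f {1,3,4} - f {1,3,6} - f {1,4,7} + f {1,6,7} - f {2,3,4} + f {2,3,6} + f {2,4,7} - f {2,6,7})\<^sup>2 + (f {1,2,6} - f {1,2,7} - f {1,4,6} + f {1,4,7} - f {2,3,6} + f {2,3,7} + f {3,4,6} - f {3,4,7})\<^sup>2 + (f {1,2,4} - f {1,2,7} - f {1,4,6} + f {1,6,7} - f {2,3,4} + f {2,3,7} + f {3,4,6} - f {3,6,7})\<^sup>2 + (f {1,2,4} - f {1,2,6} - f {1,4,7} + f {1,6,7} - f {2,3,4} + f {2,3,6} + f {3,4,7} - f {3,6,7})\<^sup>2 + (f {1,2,6} - f {1,2,7} - f {1,3,6} + f {1,3,7} - f {2,4,6} + f {2,4,7} + f {3,4,6} - f {3,4,7})\<^sup>2 + (f {1,2,3} - f {1,2,7} - f {1,3,6} + f {1,6,7} - f {2,3,4} + f {2,4,7} + f {3,4,6} - f {4,6,7})\<^sup>2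 + (f {1,2,3} - f {1,2,6} - f {1,3,7} + f {1,6,7} - f {2,3,4} + f {2,4,6} + f {3,4,7} - f {4,6,7})\<^sup>2 + (f {1,2,4} - f {1,2,7} - f {1,3,4} + f {1,3,7} - f {2,4,6} + f {2,6,7} + f {3,4,6} - f {3,6,7})\<^sup>2 + (f {1,2,3} - f {1,2,7} - f {1,3,4} + f {1,4,7} - f {2,3,6} + f {2,6,7} + f {3,4,6} - f {4,6,7})\<^sup>2 + (f {1,2,3} - f {1,2,4} - f {1,3,7} + f {1,4,7} - f {2,3,6} + f {2,4,6} + f {3,6,7} - f {4,6,7})\<^sup>2 + (f {1,2,4} - f {1,2,6} - f {1,3,4} + f {1,3,6} - f {2,4,7} + f {2,6,7} + f {3,4,7} - f {3,6,7})\<^sup>2 + (f {1,2,3} - f {1,2,6} - f {1,3,4} + f {1,4,6} - f {2,3,7} + f {2,6,7} + f {3,4,7} - f {4,6,7})\<^sup>2 + (f {1,2,3} - f {1,2,4} - f {1,3,6} + f {1,4,6} - f {2,3,7} + f {2,4,7} + f {3,6,7} - f {4,6,7})\<^sup>2 + (f {1,3,5} - f {1,3,7} - f {1,4,5} + f {1,4,7} - f {2,3,5} + f {2,3,7} + f {2,4,5} - f {2,4,7})\<^sup>2 + (f {1,3,4} - f {1,3,7} - f {1,4,5} + f {1,5,7} - f {2,3,4} + f {2,3,7} + f {2,4,5} - f {2,5,7})\<^sup>2 + (f {1,3,4} - f {1,3,5} - f {1,4,7} + f {1,5,7} - f {2,3,4} + f {2,3,5} + f {2,4,7} - f {2,5,7})\<^sup>2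 + (f {1,2,5} - f {1,2,7} - f {1,4,5} + f {1,4,7} - f {2,3,5} + f {2,3,7} + f {3,4,5} - f {3,4,7})\<^sup>2 + (f {1,2,4} - f {1,2,7} - f {1,4,5} + f {1,5,7} - f {2,3,4} + f {2,3,7} + f {3,4,5} - f {3,5,7})\<^sup>2 + (f {1,2,4} - f {1,2,5} - f {1,4,7} + f {1,5,7} - f {2,3,4} + f {2,3,5} + f {3,4,7} - f {3,5,7})\<^sup>2 + (f {1,2,5} - f {1,2,7} - f {1,3,5} + f {1,3,7} - f {2,4,5} + f {2,4,7} + f {3,4,5} - f {3,4,7})\<^sup>2 + (f {1,2,3} - f {1,2,7} - f {1,3,5} + f {1,5,7} - f {2,3,4} + f {2,4,7} + f {3,4,5} - f {4,5,7})\<^sup>2 + (f {1,2,3} - f {1,2,5} - f {1,3,7} + f {1,5,7} - f {2,3,4} + f {2,4,5} + f {3,4,7} - f {4,5,7})\<^sup>2 + (f {1,2,4} - f {1,2,7} - f {1,3,4} + f {1,3,7} - f {2,4,5} + f {2,5,7} + f {3,4,5} - f {3,5,7})\<^sup>2 + (f {1,2,3} - f {1,2,7} - f {1,3,4} + f {1,4,7} - f {2,3,5} + f {2,5,7} + f {3,4,5} - f {4,5,7})\<^sup>2 + (f {1,2,3} - f {1,2,4} - f {1,3,7} + f {1,4,7} - f {2,3,5} + f {2,4,5} + f {3,5,7} - f {4,5,7})\<^sup>2 + (f {1,2,4} - f {1,2,5} - f {1,3,4} + f {1,3,5} - f {2,4,7} + f {2,5,7} + f {3,4,7} - f {3,5,7})\<^sup>2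 + (f {1,2,3} - f {1,2,5} - f {1,3,4} + f {1,4,5} - f {2,3,7} + f {2,5,7} + f {3,4,7} - f {4,5,7})\<^sup>2 + (f {1,2,3} - f {1,2,4} - f {1,3,5} + f {1,4,5} - f {2,3,7} + f {2,4,7} + f {3,5,7} - f {4,5,7})\<^sup>2 + (f {1,3,5} - f {1,3,6} - f {1,4,5} + f {1,4,6} - f {2,3,5} + f {2,3,6} + f {2,4,5} - f {2,4,6})\<^sup>2 + (f {1,3,4} - f {1,3,6} - f {1,4,5} + f {1,5,6} - f {2,3,4} + f {2,3,6} + f {2,4,5} - f {2,5,6})\<^sup>2 + (f {1,3,4} - f {1,3,5} - f {1,4,6} + f {1,5,6} - f {2,3,4} + f {2,3,5} + f {2,4,6} - f {2,5,6})\<^sup>2 + (f {1,2,5} - f {1,2,6} - f {1,4,5} + f {1,4,6} - f {2,3,5} + f {2,3,6} + f {3,4,5} - f {3,4,6})\<^sup>2 + (f {1,2,4} - f {1,2,6} - f {1,4,5} + f {1,5,6} - f {2,3,4} + f {2,3,6} + f {3,4,5} - f {3,5,6})\<^sup>2 + (f {1,2,4} - f {1,2,5} - f {1,4,6} + f {1,5,6} - f {2,3,4} + f {2,3,5} + f {3,4,6} - f {3,5,6})\<^sup>2 + (f {1,2,5} - f {1,2,6} - f {1,3,5} + f {1,3,6} - f {2,4,5} + f {2,4,6} + f {3,4,5} - f {3,4,6})\<^sup>2 + (f {1,2,3} - f {1,2,6} - f {1,3,5} + f {1,5,6} - f {2,3,4} + f {2,4,6} + f {3,4,5} - f {4,5,6})\<^sup>2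 + (f {1,2,3} - f {1,2,5} - f {1,3,6} + f {1,5,6} - f {2,3,4} + f {2,4,5} + f {3,4,6} - f {4,5,6})\<^sup>2 + (f {1,2,4} - f {1,2,6} - f {1,3,4} + f {1,3,6} - f {2,4,5} + f {2,5,6} + f {3,4,5} - f {3,5,6})\<^sup>2 + (f {1,2,3} - f {1,2,6} - f {1,3,4} + f {1,4,6} - f {2,3,5} + f {2,5,6} + f {3,4,5} - f {4,5,6})\<^sup>2 + (f {1,2,3} - f {1,2,4} - f {1,3,6} + f {1,4,6} - f {2,3,5} + f {2,4,5} + f {3,5,6} - f {4,5,6})\<^sup>2 + (f {1,2,4} - f {1,2,5} - f {1,3,4} + f {1,3,5} - f {2,4,6} + f {2,5,6} + f {3,4,6} - f {3,5,6})\<^sup>2 + (f {1,2,3} - f {1,2,5} - f {1,3,4} + f {1,4,5} - f {2,3,6} + f {2,5,6} + f {3,4,6} - f {4,5,6})\<^sup>2 + (f {1,2,3} - f {1,2,4} - f {1,3,5} + f {1,4,5} - f {2,3,6} + f {2,4,6} + f {3,5,6} - f {4,5,6})\<^sup>2)"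
    by (intro add_nonneg_nonneg mult_nonneg_nonneg sum_list_nonneg zero_le_power2) auto
  with eq show ?thesis by linarith
qed

lemma finite_VV: "finite VV" by (simp add: VV_eq)

lemma VV_mem: "u \<in> VV \<longleftrightarrow> u \<subseteq> {1..7} \<and> card u = 3"
  by (simp add: VV_def kneser_vertices_def)

lemma VV_self: "u \<in> VV \<Longrightarrow> u \<inter> u \<noteq> {}"
  using VV_mem by force

lemma deg4: assumes "u \<in> VV" shows "card {v \<in> VV. u \<inter> v = {}} = 4"
proof -
  have u: "u \<subseteq> {1..7}" "card u = 3" using assms VV_mem by auto
  have fu: "finite u" using u(1) finite_subset by blast
  have eq: "{v \<in> VV. u \<inter> v = {}} = {B. B \<subseteq> {1..7} - u \<and> card B = 3}"
    using VV_mem by auto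
  have c4: "card ({1..7::nat} - u) = 4" using u card_Diff_subset[OF fu u(1)] by simp
  show ?thesis unfolding eq using n_subsets[of "{1..7::nat} - u" 3] c4
    by (simp add: numeral_eq_Suc)
qed

lemma sum_ind: "finite A \<Longrightarrow> (\<Sum>v\<in>A. if P v then (1::real) else 0) = real (card {v\<in>A. P v})"
  by (simp add: sum.If_cases Int_def conj_commute)

lemma deg4r: "u \<in> VV \<Longrightarrow> (\<Sum>v\<in>VV. if u \<inter> v = {} then (1::real) else 0) = 4"
  using sum_ind[OF finite_VV, of "\<lambda>v. u \<inter> v = {}"] deg4 by simp

lemma sum_if_mult: "(\<Sum>v\<in>A. if P v then c * h v else 0) = c * (\<Sum>v\<in>A. if P v then h v else (0::real))"
  unfolding sum_distrib_left by (intro sum.cong) auto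

lemma main_ineq:
  fixes S :: "nat set set" and a :: "nat set \<Rightarrow> real"
  assumes S: "S \<subseteq> VV"
    and const: "\<And>u v. u \<in> VV - S \<Longrightarrow> v \<in> VV - S \<Longrightarrow> u \<inter> v = {} \<Longrightarrow> a u = a v"
  shows "(\<Sum>u\<in>VV - S. (4 - real (card {v \<in> VV - S. u \<inter> v = {}})) * (a u + 1)\<^sup>2 - 7 * (a u)\<^sup>2)
           \<le> 7 * real (card S)"
proof -
  define T where "T = VV - S"
  define g where "g u = (if u \<in> T then a u + 1 else 0)" for u
  define f where "f u = g u - 1" for u
  define dT where "dT u = real (card {v \<in> T. u \<inter> v = {}})" for u
  have TV: "T \<subseteq> VV" by (simp add: T_def)
  have finT: "finite T" using TV finite_VV finite_subset by blast
  have indT: "(\<Sum>v\<in>T. if u \<inter> v = {} then (1::real) else 0) = dT u" for u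
    using sum_ind[OF finT] by (simp add: dT_def)
  have restr: "(\<Sum>v\<in>VV. h v) = (\<Sum>v\<in>T. h v)" if "\<And>v. v \<in> VV \<Longrightarrow> v \<notin> T \<Longrightarrow> h v = 0" for h :: "nat set \<Rightarrow> real"
    using that by (intro sum.mono_neutral_right[OF finite_VV TV]) auto
  have h1: "(\<Sum>u\<in>VV. \<Sum>v\<in>VV. if u \<inter> v = {} then g u * g v else 0) = (\<Sum>u\<in>T. (a u + 1)\<^sup>2 * dT u)"
  proof -
    have "(\<Sum>u\<in>VV. \<Sum>v\<in>VV. if u \<inter> v = {} then g u * g v else 0)
        = (\<Sum>u\<in>T. \<Sum>v\<in>VV. if u \<inter> v = {} then g u * g v else 0)"
      by (rule restr) (auto intro!: sum.neutral simp: g_def)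
    also have "\<dots> = (\<Sum>u\<in>T. \<Sum>v\<in>T. if u \<inter> v = {} then g u * g v else 0)"
      by (intro sum.cong refl restr) (simp add: g_def)
    also have "\<dots> = (\<Sum>u\<in>T. \<Sum>v\<in>T. if u \<inter> v = {} then (a u + 1)\<^sup>2 * 1 else 0)"
    proof (intro sum.cong refl)
      fix u v assume u: "u \<in> T" and v: "v \<in> T"
      show "(if u \<inter> v = {} then g u * g v else 0) = (if u \<inter> v = {} then (a u + 1)\<^sup>2 * 1 else 0)"
        using const[of u v] u v by (simp add: g_def T_def power2_eq_square)
    qed
    also have "\<dots> = (\<Sum>u\<in>T. (a u + 1)\<^sup>2 * dT u)"
      by (intro sum.cong refl) (simp only: sum_if_mult indT)
    finally show ?thesis .
  qed
  have h2: "(\<Sum>u\<in>VV. \<Sum>v\<in>VV. if u \<inter> v = {} then g u * 1 else 0) = 4 * (\<Sum>u\<in>VV. g u)"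
  proof -
    have "(\<Sum>u\<in>VV. \<Sum>v\<in>VV. if u \<inter> v = {} then g u * 1 else 0) = (\<Sum>u\<in>VV. g u * 4)"
    proof (intro sum.cong refl)
      fix u assume u: "u \<in> VV"
      have "(\<Sum>v\<in>VV. if u \<inter> v = {} then g u * 1 else 0) = g u * (\<Sum>v\<in>VV. if u \<inter> v = {} then 1 else 0)"
        unfolding sum_distrib_left by (intro sum.cong) auto
      thus "(\<Sum>v\<in>VV. if u \<inter> v = {} then g u * 1 else 0) = g u * 4" using deg4r[OF u] by simp
    qed
    thus ?thesis by (simp add: sum_distrib_right mult.commute)
  qed
  have h3: "(\<Sum>u\<in>VV. \<Sum>v\<in>VV. if u \<inter> v = {} then g v * 1 else 0) = 4 * (\<Sum>u\<in>VV. g u)"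
  proof -
    have "(\<Sum>u\<in>VV. \<Sum>v\<in>VV. if u \<inter> v = {} then g v * 1 else 0)
       = (\<Sum>v\<in>VV. \<Sum>u\<in>VV. if v \<inter> u = {} then g v * 1 else 0)"
      by (subst sum.swap) (simp add: Int_commute)
    thus ?thesis using h2 by simp
  qed
  have h4: "(\<Sum>u\<in>VV. \<Sum>v\<in>VV. if u \<inter> v = {} then (1::real) else 0) = 140"
    using deg4r card_VV by simp
  have Q: "(\<Sum>u\<in>VV. \<Sum>v\<in>VV. if u \<inter> v = {} then f u * f v else 0)
      = (\<Sum>u\<in>T. (a u + 1)\<^sup>2 * dT u) - 8 * (\<Sum>u\<in>VV. g u) + 140"
  proof -
    have pt: "(if u \<inter> v = {} then f u * f v else 0) = (if u \<inter> v = {} then g u * g v else 0) - (if u \<inter> v = {} then g u * 1 else 0)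
            - (if u \<inter> v = {} then g v * 1 else 0) + (if u \<inter> v = {} then 1 else 0)" for u v
      by (cases "u \<inter> v = {}") (simp_all add: f_def algebra_simps)
    have "(\<Sum>u\<in>VV. \<Sum>v\<in>VV. if u \<inter> v = {} then f u * f v else 0)
      = (\<Sum>u\<in>VV. \<Sum>v\<in>VV. (if u \<inter> v = {} then g u * g v else 0) - (if u \<inter> v = {} then g u * 1 else 0)
            - (if u \<inter> v = {} then g v * 1 else 0) + (if u \<inter> v = {} then 1 else 0))"
      by (simp only: pt)
    also have "\<dots> = (\<Sum>u\<in>VV. \<Sum>v\<in>VV. if u \<inter> v = {} then g u * g v else 0)
       - (\<Sum>u\<in>VV. \<Sum>v\<in>VV. if u \<inter> v = {} then g u * 1 else 0)
       - (\<Sum>u\<in>VV. \<Sum>v\<in>VV. if u \<inter> v = {} then g v * 1 else 0)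
       + (\<Sum>u\<in>VV. \<Sum>v\<in>VV. if u \<inter> v = {} then (1::real) else 0)"
      by (simp only: sum.distrib sum_subtractf)
    finally show ?thesis by (simp only: h1 h2 h3 h4)
  qed
  have F2: "(\<Sum>u\<in>VV. f u * f u) = (\<Sum>u\<in>VV. g u * g u) - 2 * (\<Sum>u\<in>VV. g u) + 35"
  proof -
    have "(\<Sum>u\<in>VV. f u * f u) = (\<Sum>u\<in>VV. g u * g u - 2 * g u + 1)"
      by (intro sum.cong refl) (simp add: f_def algebra_simps)
    also have "\<dots> = (\<Sum>u\<in>VV. g u * g u) - 2 * (\<Sum>u\<in>VV. g u) + (\<Sum>u\<in>VV. 1)"
      by (simp only: sum.distrib sum_subtractf sum_distrib_left)
    finally show ?thesis using card_VV by simp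
  qed
  have gT1: "(\<Sum>u\<in>VV. g u) = (\<Sum>u\<in>T. a u + 1)"
    by (subst restr) (auto simp: g_def)
  have gT2: "(\<Sum>u\<in>VV. g u * g u) = (\<Sum>u\<in>T. (a u + 1)\<^sup>2)"
    by (subst restr) (auto simp: g_def power2_eq_square)
  note s1 = sos1[of f]
  have cardS: "real (card S) = 35 - real (card T)"
  proof -
    have fS: "finite S" using finite_subset[OF S finite_VV] .
    have "VV = T \<union> S" "T \<inter> S = {}" using S by (auto simp: T_def)
    hence "card VV = card T + card S" using card_Un_disjoint[OF finT fS] by simp
    thus ?thesis using card_VV by simp
  qed
  have l1: "(\<Sum>u\<in>T. (4 - dT u) * (a u + 1)\<^sup>2 - 7 * (a u)\<^sup>2)
      = (\<Sum>u\<in>T. 4 * (a u + 1)\<^sup>2) - (\<Sum>u\<in>T. (a u + 1)\<^sup>2 * dT u) - (\<Sum>u\<in>T. 7 * (a u)\<^sup>2)"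
  proof -
    have "(\<Sum>u\<in>T. (4 - dT u) * (a u + 1)\<^sup>2 - 7 * (a u)\<^sup>2)
       = (\<Sum>u\<in>T. 4 * (a u + 1)\<^sup>2 - (a u + 1)\<^sup>2 * dT u - 7 * (a u)\<^sup>2)"
      by (intro sum.cong refl) (simp add: algebra_simps)
    thus ?thesis by (simp add: sum_subtractf)
  qed
  have l2: "(\<Sum>u\<in>T. 4 * (a u + 1)\<^sup>2) = 4 * (\<Sum>u\<in>T. (a u + 1)\<^sup>2)"
    by (rule sum_distrib_left[symmetric])
  have l3: "(\<Sum>u\<in>T. 7 * (a u)\<^sup>2) = 7 * (\<Sum>u\<in>T. (a u)\<^sup>2)"
    by (rule sum_distrib_left[symmetric])
  have l4: "(\<Sum>u\<in>T. (a u)\<^sup>2) = (\<Sum>u\<in>T. (a u + 1)\<^sup>2) - 2 * (\<Sum>u\<in>T. a u + 1) + (\<Sum>u\<in>T. 1)"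
  proof -
    have "(\<Sum>u\<in>T. (a u)\<^sup>2) = (\<Sum>u\<in>T. (a u + 1)\<^sup>2 - 2 * (a u + 1) + 1)"
      by (intro sum.cong refl) (simp add: algebra_simps power2_eq_square)
    also have "\<dots> = (\<Sum>u\<in>T. (a u + 1)\<^sup>2) - (\<Sum>u\<in>T. 2 * (a u + 1)) + (\<Sum>u\<in>T. 1)"
      by (simp only: sum.distrib sum_subtractf)
    also have "(\<Sum>u\<in>T. 2 * (a u + 1)) = 2 * (\<Sum>u\<in>T. a u + 1)"
      by (rule sum_distrib_left[symmetric])
    finally show ?thesis .
  qed
  have cT: "(\<Sum>u\<in>T. (1::real)) = real (card T)" by simp
  have fin: "(\<Sum>u\<in>T. (4 - dT u) * (a u + 1)\<^sup>2 - 7 * (a u)\<^sup>2) \<le> 7 * real (card S)"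
    using s1 Q F2 gT1 gT2 cardS l1 l2 l3 l4 cT by linarith
  thus ?thesis unfolding T_def dT_def .
qed



definition cmp :: "nat set set \<Rightarrow> nat set \<Rightarrow> nat set set" where
  "cmp W x = {y \<in> W. (x, y) \<in> (induced_edges kneser_adj W)\<^sup>*}"

lemma num_comp: "num_components kneser_adj W = card (cmp W ` W)"
  by (simp add: num_components_def components_def cmp_def)

lemma sym_ie: "sym (induced_edges kneser_adj W)"
  by (auto simp: sym_def induced_edges_def kneser_adj_def Int_commute)

lemma rt_sym: "(x, y) \<in> (induced_edges kneser_adj W)\<^sup>* \<Longrightarrow> (y, x) \<in> (induced_edges kneser_adj W)\<^sup>*"
  using sym_rtrancl[OF sym_ie, of W] by (auto simp: sym_def)

lemma cmp_sub: "cmp W x \<subseteq> W" by (auto simp: cmp_def)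

lemma cmp_self: "x \<in> W \<Longrightarrow> x \<in> cmp W x" by (simp add: cmp_def)

lemma cmp_eq: assumes "y \<in> cmp W x" shows "cmp W y = cmp W x"
proof -
  have xy: "(x, y) \<in> (induced_edges kneser_adj W)\<^sup>*" using assms by (simp add: cmp_def)
  have yx: "(y, x) \<in> (induced_edges kneser_adj W)\<^sup>*" using rt_sym[OF xy] .
  show ?thesis unfolding cmp_def using rtrancl_trans[OF xy] rtrancl_trans[OF yx] by auto
qed

lemma cmp_closed: assumes "u \<in> cmp W x" "v \<in> W" "u \<inter> v = {}" shows "v \<in> cmp W x"
proof -
  have "(x, u) \<in> (induced_edges kneser_adj W)\<^sup>*" "u \<in> W" using assms(1) by (auto simp: cmp_def)
  moreover have "(u, v) \<in> induced_edges kneser_adj W"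
    using assms(2,3) \<open>u \<in> W\<close> by (simp add: induced_edges_def kneser_adj_def)
  ultimately show ?thesis using assms(2) by (auto simp: cmp_def intro: rtrancl_into_rtrancl)
qed

lemma cmp_disj: assumes "C \<in> cmp W ` W" "D \<in> cmp W ` W" "C \<noteq> D" shows "C \<inter> D = {}"
proof (rule ccontr)
  assume "C \<inter> D \<noteq> {}"
  then obtain z where z: "z \<in> C" "z \<in> D" by blast
  from assms(1,2) obtain a b where ab: "C = cmp W a" "D = cmp W b" by blast
  have "cmp W z = C" using cmp_eq[of z W a] z(1) ab(1) by simp
  moreover have "cmp W z = D" using cmp_eq[of z W b] z(2) ab(2) by simp
  ultimately have "C = D" by simp
  thus False using assms(3) by simp
qed

lemma cmp_Union: "\<Union>(cmp W ` W) = W"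
proof
  show "\<Union>(cmp W ` W) \<subseteq> W" using cmp_sub by (simp add: UN_least)
  show "W \<subseteq> \<Union>(cmp W ` W)" by (meson UN_iff cmp_self subsetI)
qed

lemma sum_cmp:
  fixes h :: "nat set \<Rightarrow> real"
  assumes fW: "finite W" shows "(\<Sum>u\<in>W. h u) = (\<Sum>C\<in>cmp W ` W. \<Sum>u\<in>C. h u)"
proof -
  have f1: "\<forall>A\<in>cmp W ` W. finite A" using finite_subset[OF cmp_sub fW] by auto
  have f2: "\<forall>A\<in>cmp W ` W. \<forall>B\<in>cmp W ` W. A \<noteq> B \<longrightarrow> A \<inter> B = {}"
    using cmp_disj by blast
  have "(\<Sum>u\<in>\<Union>(cmp W ` W). h u) = (\<Sum>C\<in>cmp W ` W. \<Sum>u\<in>C. h u)"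
    using sum.Union_disjoint[OF f1 f2, of h] by (simp add: comp_def)
  thus ?thesis by (simp add: cmp_Union)
qed

lemma no_triangle:
  assumes "x \<in> VV" "y \<in> VV" "z \<in> VV" "x \<inter> y = {}" "x \<inter> z = {}" "y \<inter> z = {}"
  shows False
proof -
  have fx: "x \<subseteq> {1..7}" "card x = 3" and fy: "y \<subseteq> {1..7}" "card y = 3" and fz: "z \<subseteq> {1..7}" "card z = 3"
    using assms VV_mem by auto
  have fin: "finite x" "finite y" "finite z" using fx fy fz finite_subset by blast+
  have "card (x \<union> y) = 6" using card_Un_disjoint[OF fin(1,2) assms(4)] fx fy by simp
  moreover have "(x \<union> y) \<inter> z = {}" using assms by blast
  ultimately have "card (x \<union> y \<union> z) = 9" using card_Un_disjoint[of "x \<union> y" z] fin fz by simp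
  moreover have "card (x \<union> y \<union> z) \<le> card {1..7::nat}"
    using fx fy fz by (intro card_mono) auto
  ultimately show False by simp
qed

lemma arith_main:
  fixes n e :: nat
  assumes "4 \<le> n" "n \<le> 30" "70 * n \<le> 35 * e + 2 * n * n"
  shows "28 * n < e * (3 * n + 4)"
proof -
  have "n = 4 \<or> n = 5 \<or> n = 6 \<or> n = 7 \<or> n = 8 \<or> n = 9 \<or> n = 10 \<or> n = 11 \<or> n = 12 \<or> n = 13 \<or> n = 14
    \<or> n = 15 \<or> n = 16 \<or> n = 17 \<or> n = 18 \<or> n = 19 \<or> n = 20 \<or> n = 21 \<or> n = 22 \<or> n = 23 \<or> n = 24 \<or> n = 25
    \<or> n = 26 \<or> n = 27 \<or> n = 28 \<or> n = 29 \<or> n = 30" using assms(1,2) by presburger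
  thus ?thesis using assms(3) by (elim disjE) (simp_all, (subgoal_tac "9 \<le> e", linarith, presburger))
qed

lemma val_eq:
  fixes n e :: nat
  assumes "1 \<le> n" "e \<le> 4 * n"
  shows "real e * (real e / (7 * real n - real e) + 1)\<^sup>2 - 7 * real n * (real e / (7 * real n - real e))\<^sup>2
         = 7 * real n * real e / (7 * real n - real e)"
proof -
  define D where "D = 7 * real n - real e"
  have pos: "D > 0" using assms unfolding D_def by linarith
  have a1: "real e / D + 1 = 7 * real n / D" using pos unfolding D_def by (simp add: field_simps)
  have "real e * (7 * real n / D)\<^sup>2 - 7 * real n * (real e / D)\<^sup>2 = 7 * real n * real e * D / D\<^sup>2"
    unfolding D_def by (simp add: power_divide diff_divide_distrib[symmetric] power2_eq_square algebra_simps)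
  also have "\<dots> = 7 * real n * real e / D" using pos by (simp add: power2_eq_square)
  finally show ?thesis using a1 unfolding D_def by simp
qed

lemma val_ge:
  fixes n e :: nat
  assumes "1 \<le> n" "e \<le> 4 * n" "28 * n \<le> e * (3 * n + 4)"
  shows "28 / 3 \<le> 7 * real n * real e / (7 * real n - real e)"
proof -
  have pos: "7 * real n - real e > 0" using assms by linarith
  have h: "28 * real n \<le> real e * (3 * real n + 4)"
  proof -
    have "real (28 * n) \<le> real (e * (3 * n + 4))" using assms(3) by (simp only: of_nat_le_iff)
    thus ?thesis by simp
  qed
  have "28 / 3 * (7 * real n - real e) \<le> 7 * real n * real e"
    using h by (simp add: algebra_simps)
  thus ?thesis using pos by (simp add: pos_le_divide_eq)
qed

lemma val_gt:
  fixes n e :: nat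
  assumes "1 \<le> n" "e \<le> 4 * n" "28 * n < e * (3 * n + 4)"
  shows "28 / 3 < 7 * real n * real e / (7 * real n - real e)"
proof -
  have pos: "7 * real n - real e > 0" using assms by linarith
  have h: "28 * real n < real e * (3 * real n + 4)"
  proof -
    have "real (28 * n) < real (e * (3 * n + 4))" using assms(3) by (simp only: of_nat_less_iff)
    thus ?thesis by simp
  qed
  have "28 / 3 * (7 * real n - real e) < 7 * real n * real e"
    using h by (simp add: algebra_simps)
  thus ?thesis using pos by (simp add: pos_less_divide_eq)
qed



lemma nbr_sub:
  assumes S: "S \<subseteq> VV" and u: "u \<in> cmp (VV - S) x"
  shows "{v \<in> VV - S. u \<inter> v = {}} = {v \<in> cmp (VV - S) x. u \<inter> v = {}}"
  using cmp_closed[OF u] cmp_sub[of "VV - S" x] by blast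

lemma dn_le4: "u \<in> VV \<Longrightarrow> card {v \<in> T. u \<inter> v = {}} \<le> 4" if "T \<subseteq> VV" for T
proof -
  assume u: "u \<in> VV"
  have "card {v \<in> T. u \<inter> v = {}} \<le> card {v \<in> VV. u \<inter> v = {}}"
    using that finite_VV by (intro card_mono) auto
  thus ?thesis using deg4[OF u] by simp
qed

lemma comp_props:
  assumes S: "S \<subseteq> VV" and c2: "2 \<le> card (cmp (VV - S) ` (VV - S))" and x: "x \<in> VV - S"
  defines "T \<equiv> VV - S"
  defines "C \<equiv> cmp T x"
  defines "n \<equiv> card C"
  defines "e \<equiv> (\<Sum>u\<in>C. 4 - card {v \<in> T. u \<inter> v = {}})"
  shows "1 \<le> n" "e \<le> 4 * n" "28 * n \<le> e * (3 * n + 4)" "2 \<le> n \<Longrightarrow> 28 * n < e * (3 * n + 4)"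
proof -
  define dn where "dn u = card {v \<in> T. u \<inter> v = {}}" for u
  have TV: "T \<subseteq> VV" by (simp add: T_def)
  have finT: "finite T" using TV finite_VV finite_subset by blast
  have CT: "C \<subseteq> T" by (simp add: C_def cmp_sub)
  have CV: "C \<subseteq> VV" using CT TV by blast
  have finC: "finite C" using CT finT finite_subset by blast
  have xC: "x \<in> C" using x by (simp add: C_def T_def cmp_self)
  have N1: "{v \<in> T. u \<inter> v = {}} = {v \<in> C. u \<inter> v = {}}" if "u \<in> C" for u
    using nbr_sub[OF S, of u x] that by (simp add: C_def T_def)
  have N2: "dn u \<le> 4" if "u \<in> C" for u
    using dn_le4[OF TV] CV that by (auto simp: dn_def)
  have N3: "dn u \<le> n - 1" if "u \<in> C" for u
  proof -
    have "{v \<in> C. u \<inter> v = {}} \<subseteq> C - {u}" using VV_self[of u] CV that by auto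
    hence "card {v \<in> C. u \<inter> v = {}} \<le> card (C - {u})" using finC by (intro card_mono) auto
    thus ?thesis using N1[OF that] that finC by (simp add: dn_def n_def)
  qed
  have e_def': "e = (\<Sum>u\<in>C. 4 - dn u)" by (simp add: e_def dn_def)
  show n1: "1 \<le> n" using xC finC by (simp add: n_def Suc_le_eq card_gt_0_iff) blast
  show e4: "e \<le> 4 * n"
  proof -
    have "e \<le> (\<Sum>u\<in>C. 4)" unfolding e_def' by (intro sum_mono) simp
    thus ?thesis by (simp add: n_def)
  qed
  have n30: "n \<le> 30"
  proof -
    obtain D where D: "D \<in> cmp T ` T" "D \<noteq> C"
    proof -
      have "\<not> (cmp T ` T \<subseteq> {C})"
      proof
        assume "cmp T ` T \<subseteq> {C}"
        hence "card (cmp T ` T) \<le> card {C}" by (intro card_mono) auto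
        hence "card (cmp T ` T) \<le> 1" by simp
        thus False using c2 by (simp add: T_def)
      qed
      thus ?thesis using that by blast
    qed
    then obtain y where y: "y \<in> T" "D = cmp T y" by blast
    have yD: "y \<in> D" using y by (simp add: cmp_self)
    have yC: "y \<notin> C"
    proof
      assume "y \<in> C"
      hence "cmp T y = C" using cmp_eq by (simp add: C_def)
      thus False using y D by simp
    qed
    have NC: "v \<notin> C" if "v \<in> VV" "y \<inter> v = {}" for v
    proof
      assume vC: "v \<in> C"
      have "v \<inter> y = {}" using that by blast
      hence "y \<in> C" using cmp_closed[of v T x y] vC y(1) by (simp add: C_def)
      thus False using yC by simp
    qed
    have sub: "C \<subseteq> VV - insert y {v \<in> VV. y \<inter> v = {}}" using CV NC yC by blast
    have yV: "y \<in> VV" using y TV by blast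
    have "card (insert y {v \<in> VV. y \<inter> v = {}}) = 5"
      using deg4[OF yV] VV_self[OF yV] finite_VV by (subst card_insert_disjoint) auto
    moreover have "insert y {v \<in> VV. y \<inter> v = {}} \<subseteq> VV" using yV by blast
    ultimately have "card (VV - insert y {v \<in> VV. y \<inter> v = {}}) = 30"
      using card_VV finite_VV by (simp add: card_Diff_subset finite_subset)
    thus ?thesis using card_mono[OF _ sub] finite_VV unfolding n_def by (metis finite_Diff)
  qed
  have iso: "70 * n \<le> 35 * e + 2 * n * n"
  proof -
    define f :: "nat set \<Rightarrow> real" where "f u = (if u \<in> C then 1 else 0)" for u
    have restr: "(\<Sum>v\<in>VV. h v) = (\<Sum>v\<in>C. h v)" if "\<And>v. v \<in> VV \<Longrightarrow> v \<notin> C \<Longrightarrow> h v = 0" for h :: "nat set \<Rightarrow> real"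
      using that by (intro sum.mono_neutral_right[OF finite_VV CV]) auto
    have q: "(\<Sum>u\<in>VV. \<Sum>v\<in>VV. if u \<inter> v = {} then f u * f v else 0) = (\<Sum>u\<in>C. real (dn u))"
    proof -
      have "(\<Sum>u\<in>VV. \<Sum>v\<in>VV. if u \<inter> v = {} then f u * f v else 0)
          = (\<Sum>u\<in>C. \<Sum>v\<in>VV. if u \<inter> v = {} then f u * f v else 0)"
        by (rule restr) (auto intro!: sum.neutral simp: f_def)
      also have "\<dots> = (\<Sum>u\<in>C. \<Sum>v\<in>C. if u \<inter> v = {} then f u * f v else 0)"
        by (intro sum.cong refl restr) (simp add: f_def)
      also have "\<dots> = (\<Sum>u\<in>C. \<Sum>v\<in>C. if u \<inter> v = {} then 1 else 0)"
        by (intro sum.cong refl) (simp add: f_def)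
      also have "\<dots> = (\<Sum>u\<in>C. real (dn u))"
      proof (intro sum.cong refl)
        fix u assume u: "u \<in> C"
        show "(\<Sum>v\<in>C. if u \<inter> v = {} then (1::real) else 0) = real (dn u)"
          using sum_ind[OF finC, of "\<lambda>v. u \<inter> v = {}"] N1[OF u] by (simp add: dn_def)
      qed
      finally show ?thesis .
    qed
    have q2: "(\<Sum>u\<in>VV. f u * f u) = real n"
    proof -
      have "(\<Sum>u\<in>VV. f u * f u) = (\<Sum>u\<in>C. f u * f u)" by (rule restr) (simp add: f_def)
      also have "\<dots> = (\<Sum>u\<in>C. 1)" by (intro sum.cong refl) (simp add: f_def)
      finally show ?thesis by (simp add: n_def)
    qed
    have q3: "(\<Sum>u\<in>VV. f u) = real n"
    proof -
      have "(\<Sum>u\<in>VV. f u) = (\<Sum>u\<in>C. f u)" by (rule restr) (simp add: f_def)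
      also have "\<dots> = (\<Sum>u\<in>C. 1)" by (intro sum.cong refl) (simp add: f_def)
      finally show ?thesis by (simp add: n_def)
    qed
    have ineq: "980 * (\<Sum>u\<in>C. real (dn u)) \<le> 1960 * real n + 56 * (real n)\<^sup>2"
      using sos2[of f] q q2 q3 by simp
    have esum: "e + (\<Sum>u\<in>C. dn u) = 4 * n"
    proof -
      have "e + (\<Sum>u\<in>C. dn u) = (\<Sum>u\<in>C. 4 - dn u + dn u)" unfolding e_def' by (simp add: sum.distrib)
      also have "\<dots> = (\<Sum>u\<in>C. 4)" using N2 by (intro sum.cong refl) simp
      finally show ?thesis by (simp add: n_def)
    qed
    have "real e + (\<Sum>u\<in>C. real (dn u)) = 4 * real n"
    proof -
      have "real (e + (\<Sum>u\<in>C. dn u)) = real (4 * n)" using esum by simp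
      thus ?thesis by simp
    qed
    hence "70 * real n \<le> 35 * real e + 2 * real n * real n"
      using ineq by (simp add: power2_eq_square) 
    hence "real (70 * n) \<le> real (35 * e + 2 * n * n)" by simp
    thus ?thesis by (simp only: of_nat_le_iff)
  qed
  have small: "28 * n < e * (3 * n + 4)" if n2: "2 \<le> n"
  proof (cases "n \<le> 3")
    case False
    thus ?thesis using arith_main[of n e] iso n30 by simp
  next
    case True
    hence "n = 2 \<or> n = 3" using n2 by linarith
    thus ?thesis
    proof
      assume n: "n = 2"
      have "(\<Sum>u\<in>C. 3) \<le> e" unfolding e_def' using N3 n by (intro sum_mono) fastforce
      hence "6 \<le> e" using n by (simp add: n_def)
      thus ?thesis using n by simp
    next
      assume n: "n = 3"
      have "7 \<le> e"
      proof (rule ccontr)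
        assume "\<not> 7 \<le> e"
        hence e6: "e \<le> 6" by simp
        have lb: "2 \<le> 4 - dn u" if "u \<in> C" for u using N3[OF that] n by simp
        have "(\<Sum>u\<in>C. (4 - dn u) - 2) = e - (\<Sum>u\<in>C. 2)"
          unfolding e_def' using lb by (rule sum_subtractf_nat)
        also have "\<dots> = 0" using e6 n by (simp add: n_def)
        finally have "\<forall>u\<in>C. (4 - dn u) - 2 = 0" using finC by simp
        hence d2: "dn u = 2" if "u \<in> C" for u using N3[OF that] n that by fastforce
        have adj: "u \<inter> v = {}" if "u \<in> C" "v \<in> C" "u \<noteq> v" for u v
        proof -
          have sub: "{w \<in> C. u \<inter> w = {}} \<subseteq> C - {u}" using VV_self[of u] CV that(1) by auto
          have "card {w \<in> C. u \<inter> w = {}} = 2" using d2[OF that(1)] N1[OF that(1)] by (simp add: dn_def)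
          moreover have "card (C - {u}) = 2" using that(1) finC n by (simp add: n_def)
          ultimately have "{w \<in> C. u \<inter> w = {}} = C - {u}"
            using sub finC by (intro card_subset_eq) auto
          thus ?thesis using that by blast
        qed
        obtain p q r where pqr: "C = {p, q, r}" "p \<noteq> q" "q \<noteq> r" "p \<noteq> r"
          using n by (auto simp: n_def card_3_iff)
        show False
          using no_triangle[of p q r] adj[of p q] adj[of p r] adj[of q r] pqr CV by auto
      qed
      thus ?thesis using n by simp
    qed
  qed
  show "2 \<le> n \<Longrightarrow> 28 * n < e * (3 * n + 4)" using small by blast
  show "28 * n \<le> e * (3 * n + 4)"
  proof (cases "2 \<le> n")
    case True thus ?thesis using small by simp
  next
    case False
    hence n: "n = 1" using n1 by simp
    have "dn x = 0" using N3[OF xC] n by simp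
    moreover have "C = {x}" using n xC finC by (simp add: n_def card_1_singleton_iff) (metis singletonD)
    ultimately have "e = 4" by (simp add: e_def')
    thus ?thesis using n by simp
  qed
qed



lemma tough_ineq:
  assumes S: "S \<subseteq> VV" and c2: "2 \<le> num_components kneser_adj (VV - S)"
  shows "4 * real (num_components kneser_adj (VV - S)) \<le> 3 * real (card S)"
    and "\<And>u v. u \<in> VV - S \<Longrightarrow> v \<in> VV - S \<Longrightarrow> u \<inter> v = {}
           \<Longrightarrow> 4 * real (num_components kneser_adj (VV - S)) < 3 * real (card S)"
proof -
  define T where "T = VV - S"
  define CC where "CC = cmp T ` T"
  define dn where "dn u = card {v \<in> T. u \<inter> v = {}}" for u
  define nC where "nC C = card C" for C :: "nat set set"
  define eC where "eC C = (\<Sum>u\<in>C. 4 - dn u)" for C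
  define aC where "aC C = real (eC C) / (7 * real (nC C) - real (eC C))" for C
  define a where "a u = aC (cmp T u)" for u
  define val where "val C = 7 * real (nC C) * real (eC C) / (7 * real (nC C) - real (eC C))" for C
  have TV: "T \<subseteq> VV" by (simp add: T_def)
  have finT: "finite T" using TV finite_VV finite_subset by blast
  have c: "num_components kneser_adj (VV - S) = card CC" by (simp add: num_comp CC_def T_def)
  have c2': "2 \<le> card (cmp (VV - S) ` (VV - S))" using c2 by (simp add: num_comp)
  have const: "a u = a v" if "u \<in> VV - S" "v \<in> VV - S" "u \<inter> v = {}" for u v
  proof -
    have "v \<in> cmp T u" using cmp_closed[OF cmp_self[of u T]] that by (simp add: T_def)
    hence "cmp T v = cmp T u" by (rule cmp_eq)
    thus ?thesis by (simp add: a_def)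
  qed
  have MI: "(\<Sum>u\<in>T. (4 - real (dn u)) * (a u + 1)\<^sup>2 - 7 * (a u)\<^sup>2) \<le> 7 * real (card S)"
    using main_ineq[OF S, of a] const by (simp add: T_def dn_def)
  have cprops: "1 \<le> nC C \<and> eC C \<le> 4 * nC C \<and> 28 * nC C \<le> eC C * (3 * nC C + 4)
       \<and> (2 \<le> nC C \<longrightarrow> 28 * nC C < eC C * (3 * nC C + 4))" if Cin: "C \<in> CC" for C
  proof -
    obtain x where x: "x \<in> T" "C = cmp T x" using Cin unfolding CC_def by blast
    show ?thesis using comp_props[OF S c2', of x] x by (simp add: nC_def eC_def dn_def T_def)
  qed
  have compval: "(\<Sum>u\<in>C. (4 - real (dn u)) * (a u + 1)\<^sup>2 - 7 * (a u)\<^sup>2) = val C" if CinCC: "C \<in> CC" for C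
  proof -
    obtain x where x: "x \<in> T" "C = cmp T x" using CinCC unfolding CC_def by blast
    have au: "a u = aC C" if "u \<in> C" for u using cmp_eq[of u T x] that x by (simp add: a_def)
    have CV: "C \<subseteq> VV" using x cmp_sub[of T x] TV by blast
    have d4: "dn u \<le> 4" if "u \<in> C" for u using dn_le4[OF TV] CV that by (auto simp: dn_def)
    have "(\<Sum>u\<in>C. (4 - real (dn u)) * (a u + 1)\<^sup>2 - 7 * (a u)\<^sup>2)
        = (\<Sum>u\<in>C. (4 - real (dn u)) * (aC C + 1)\<^sup>2 - 7 * (aC C)\<^sup>2)"
      by (intro sum.cong refl) (simp add: au)
    also have "\<dots> = (\<Sum>u\<in>C. (4 - real (dn u))) * (aC C + 1)\<^sup>2 - real (nC C) * (7 * (aC C)\<^sup>2)"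
      by (simp only: sum_subtractf sum_distrib_right[symmetric] sum_constant nC_def)
    also have "(\<Sum>u\<in>C. (4 - real (dn u))) = real (eC C)"
      unfolding eC_def using d4 by (simp add: of_nat_diff)
    finally have eq: "(\<Sum>u\<in>C. (4 - real (dn u)) * (a u + 1)\<^sup>2 - 7 * (a u)\<^sup>2)
        = real (eC C) * (aC C + 1)\<^sup>2 - 7 * real (nC C) * (aC C)\<^sup>2" by simp
    show ?thesis unfolding eq aC_def val_def using val_eq[of "nC C" "eC C"] cprops[OF CinCC] by simp
  qed
  have total: "(\<Sum>C\<in>CC. val C) \<le> 7 * real (card S)"
  proof -
    have "(\<Sum>u\<in>T. (4 - real (dn u)) * (a u + 1)\<^sup>2 - 7 * (a u)\<^sup>2)
        = (\<Sum>C\<in>CC. \<Sum>u\<in>C. (4 - real (dn u)) * (a u + 1)\<^sup>2 - 7 * (a u)\<^sup>2)"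
      unfolding CC_def by (rule sum_cmp[OF finT])
    also have "\<dots> = (\<Sum>C\<in>CC. val C)" by (intro sum.cong refl compval)
    finally show ?thesis using MI by simp
  qed
  have vge: "28 / 3 \<le> val C" if "C \<in> CC" for C
    using val_ge[of "nC C" "eC C"] cprops[OF that] by (simp add: val_def)
  have finCC: "finite CC" using finT by (simp add: CC_def)
  have lowsum: "real (card CC) * (28 / 3) \<le> (\<Sum>C\<in>CC. val C)"
    using sum_bounded_below[of CC "28/3" val] vge by simp
  show "4 * real (num_components kneser_adj (VV - S)) \<le> 3 * real (card S)"
    using total lowsum c by simp
  fix u v assume uv: "u \<in> VV - S" "v \<in> VV - S" "u \<inter> v = {}"
  define C0 where "C0 = cmp T u"
  have C0: "C0 \<in> CC" using uv by (simp add: C0_def CC_def T_def)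
  have "u \<in> C0" "v \<in> C0" using uv cmp_self[of u T] cmp_closed[OF cmp_self[of u T]] by (simp_all add: C0_def T_def)
  moreover have "u \<noteq> v" using uv VV_self by auto
  moreover have "finite C0" using C0 finCC finT cmp_sub[of T u] finite_subset by (auto simp: C0_def)
  ultimately have "2 \<le> nC C0"
  proof -
    assume a: "u \<in> C0" "v \<in> C0" "u \<noteq> v" "finite C0"
    have "card {u, v} \<le> card C0" using a by (intro card_mono) auto
    thus ?thesis using a(3) by (simp add: nC_def)
  qed
  hence vgt: "28 / 3 < val C0"
    using val_gt[of "nC C0" "eC C0"] cprops[OF C0] by (simp add: val_def)
  have "(\<Sum>C\<in>CC. 28 / 3) < (\<Sum>C\<in>CC. val C)"
    using sum_strict_mono_ex1[OF finCC, of "\<lambda>_. 28/3" val] vge C0 vgt by auto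
  hence "real (card CC) * (28 / 3) < (\<Sum>C\<in>CC. val C)" by simp
  thus "4 * real (num_components kneser_adj (VV - S)) < 3 * real (card S)"
    using total c by simp
qed



lemma indep_ncomp:
  assumes "\<forall>a\<in>W. \<forall>b\<in>W. \<not> kneser_adj a b"
  shows "num_components kneser_adj W = card W"
proof -
  have ie: "induced_edges kneser_adj W = {}" using assms by (auto simp: induced_edges_def)
  have "cmp W x = {x}" if "x \<in> W" for x using that by (auto simp: cmp_def ie)
  hence "cmp W ` W = (\<lambda>x. {x}) ` W" by auto
  moreover have "card ((\<lambda>x. {x}) ` W) = card W" by (intro card_image) (auto simp: inj_on_def)
  ultimately show ?thesis by (simp add: num_comp)
qed

lemma alpha_bound:
  assumes J: "J \<subseteq> VV" and ind: "\<forall>a\<in>J. \<forall>b\<in>J. \<not> kneser_adj a b"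
  shows "card J \<le> 15"
proof -
  have S: "VV - J \<subseteq> VV" by blast
  have VJ: "VV - (VV - J) = J" using J by blast
  have "(\<Sum>u\<in>VV - (VV - J). (4 - real (card {v \<in> VV - (VV - J). u \<inter> v = {}})) * ((4/3::real) + 1)\<^sup>2 - 7 * (4/3)\<^sup>2)
     \<le> 7 * real (card (VV - J))"
    by (rule main_ineq[OF S]) simp
  moreover have "{v \<in> J. u \<inter> v = {}} = {}" if "u \<in> J" for u
    using ind that by (auto simp: kneser_adj_def)
  ultimately have "(\<Sum>u\<in>J. 28 / 3 :: real) \<le> 7 * real (card (VV - J))"
    unfolding VJ by (simp add: power2_eq_square cong: sum.cong)
  moreover have "card (VV - J) = 35 - card J"
    using J finite_VV card_VV by (simp add: card_Diff_subset finite_subset)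
  moreover have "card J \<le> 35" using J finite_VV card_VV card_mono by metis
  ultimately show ?thesis by (simp add: of_nat_diff)
qed

definition star1 :: "nat set set" where "star1 = {A \<in> VV. 1 \<in> A}"

lemma card_star1: "card star1 = 15"
proof -
  have "star1 = set (filter (\<lambda>A. 1 \<in> A) LL)" by (auto simp: star1_def VV_eq)
  moreover have "card (set (filter (\<lambda>A. (1::nat) \<in> A) LL)) = length (filter (\<lambda>A. 1 \<in> A) LL)"
    by (rule distinct_card) (simp add: distinct_LL)
  ultimately have "card star1 = length (filter (\<lambda>A. 1 \<in> A) LL)" by (simp only:)
  also have "\<dots> = 15" by (simp add: LL_def)
  finally show ?thesis .
qed

lemma star1_indep: "\<forall>a\<in>star1. \<forall>b\<in>star1. \<not> kneser_adj a b"
  by (auto simp: star1_def kneser_adj_def)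

theorem theorem4p3:
  shows "toughness (kneser_vertices 7 3) kneser_adj = 4 / 3 \<and>
    (\<forall>S. vertex_cut (kneser_vertices 7 3) kneser_adj S \<and>
         real (card S) / real (num_components kneser_adj (kneser_vertices 7 3 - S)) = 4 / 3
       \<longrightarrow> (\<exists>I. maximum_independent_set (kneser_vertices 7 3) kneser_adj I \<and>
                 S = kneser_vertices 7 3 - I))"
proof -
  have VVd: "kneser_vertices 7 3 = VV" by (simp add: VV_def)
  define S0 where "S0 = VV - star1"
  have st: "star1 \<subseteq> VV" by (auto simp: star1_def)
  have T0: "VV - S0 = star1" using st by (auto simp: S0_def)
  have nc0: "num_components kneser_adj (VV - S0) = 15"
    unfolding T0 using indep_ncomp[OF star1_indep] card_star1 by simp
  have cS0: "card S0 = 20" unfolding S0_def using st card_star1 card_VV finite_VV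
    by (simp add: card_Diff_subset finite_subset)
  have cut0: "vertex_cut VV kneser_adj S0" using nc0 by (simp add: vertex_cut_def S0_def)
  have lb: "4 / 3 \<le> real (card S) / real (num_components kneser_adj (VV - S))"
    if "vertex_cut VV kneser_adj S" for S
  proof -
    have S: "S \<subseteq> VV" and c2: "2 \<le> num_components kneser_adj (VV - S)"
      using that by (auto simp: vertex_cut_def)
    have "4 * real (num_components kneser_adj (VV - S)) \<le> 3 * real (card S)"
      by (rule tough_ineq(1)[OF S c2])
    moreover have "0 < real (num_components kneser_adj (VV - S))" using c2 by simp
    ultimately show ?thesis by (simp add: le_divide_eq)
  qed
  have t: "toughness VV kneser_adj = 4 / 3"
    unfolding toughness_def
  proof (rule cInf_eq_minimum)
    show "4 / 3 \<in> {real (card S) / real (num_components kneser_adj (VV - S)) |S. vertex_cut VV kneser_adj S}"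
      using cut0 nc0 cS0 by force
  next
    fix x assume "x \<in> {real (card S) / real (num_components kneser_adj (VV - S)) |S. vertex_cut VV kneser_adj S}"
    then obtain S where "vertex_cut VV kneser_adj S" "x = real (card S) / real (num_components kneser_adj (VV - S))"
      by blast
    thus "4 / 3 \<le> x" using lb by simp
  qed
  have part2: "\<exists>I. maximum_independent_set VV kneser_adj I \<and> S = VV - I"
    if cut: "vertex_cut VV kneser_adj S"
      and eq: "real (card S) / real (num_components kneser_adj (VV - S)) = 4 / 3" for S
  proof -
    have S: "S \<subseteq> VV" and c2: "2 \<le> num_components kneser_adj (VV - S)"
      using cut by (auto simp: vertex_cut_def)
    have pos: "0 < real (num_components kneser_adj (VV - S))" using c2 by simp
    have e3: "3 * real (card S) = 4 * real (num_components kneser_adj (VV - S))"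
      using eq pos by (simp add: divide_eq_eq)
    have ind: "\<forall>a\<in>VV - S. \<forall>b\<in>VV - S. \<not> kneser_adj a b"
    proof (intro ballI notI)
      fix a b assume ab: "a \<in> VV - S" "b \<in> VV - S" "kneser_adj a b"
      hence "4 * real (num_components kneser_adj (VV - S)) < 3 * real (card S)"
        using tough_ineq(2)[OF S c2, of a b] by (simp add: kneser_adj_def)
      thus False using e3 by simp
    qed
    have nc: "num_components kneser_adj (VV - S) = card (VV - S)" by (rule indep_ncomp[OF ind])
    have cs: "card (VV - S) = 35 - card S" using S finite_VV card_VV by (simp add: card_Diff_subset finite_subset)
    have cle: "card S \<le> 35" using S finite_VV card_VV card_mono by metis
    have c15: "card (VV - S) = 15" using e3 nc cs cle by (simp add: of_nat_diff)
    have mis: "maximum_independent_set VV kneser_adj (VV - S)"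
      unfolding maximum_independent_set_def independent_set_def
      using ind alpha_bound c15 by auto
    moreover have "S = VV - (VV - S)" using S by blast
    ultimately show ?thesis by blast
  qed
  show ?thesis unfolding VVd using t part2 by blast
qed

end
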